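(* Let $P\subset\mathbb{R}^d$ be a finite point set whose minimum pairwise distance is $1$, and let $G$ be the final graph of the uncoordinated construction (described in the context) on $P$ with parameter $s>1$. Then for any two points $p,q\in P$ there is a path in $G$ between $p$ and $q$ of Euclidean length at most $\frac{s+1}{s-1}|pq|$ using at most $2|pq|^{1/(1+\lg s)}$ edges.
   Context: Fix $d\ge 1$; $|xy|$ is Euclidean distance; $\lg$ is logarithm base 2. Uncoordinated construction: start with the graph $G$ on vertex set $P$ with no edges. Every ordered pair $(p,q)$ of distinct points of $P$ is processed exactly once, in an arbitrary order, one at a time. When $(p,q)$ is processed, the edge $pq$ is added to $G$ unless $G$ currently contains an edge whose endpoints can be labeled $p',q'$ with $|pp'|\le |p'q'|/(2s+2)$ and $|qq'|\le |p'q'|/(2s+2)$. $G$ is the graph after all pairs are processed. *)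

theory Defs
  imports "HOL-Analysis.Analysis"
begin

text \<open>Graphs are represented by their edge sets: sets of unordered pairs (doubletons).\<close>

definition lg :: "real \<Rightarrow> real" where
  "lg x = log 2 x"

definition covered :: "real \<Rightarrow> ('a::metric_space) set set \<Rightarrow> 'a \<Rightarrow> 'a \<Rightarrow> bool" where
  "covered s E p q \<longleftrightarrow> (\<exists>p' q'. {p', q'} \<in> E \<and>
      dist p p' \<le> dist p' q' / (2 * s + 2) \<and> dist q q' \<le> dist p' q' / (2 * s + 2))"

definition uc_step :: "real \<Rightarrow> ('a::metric_space) set set \<Rightarrow> 'a \<times> 'a \<Rightarrow> 'a set set" where
  "uc_step s E pq = (if covered s E (fst pq) (snd pq) then E else insert {fst pq, snd pq} E)"

definition uc_graph :: "real \<Rightarrow> ('a::metric_space \<times> 'a) list \<Rightarrow> 'a set set" where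
  "uc_graph s pairs = foldl (uc_step s) {} pairs"

definition valid_order :: "'a set \<Rightarrow> ('a \<times> 'a) list \<Rightarrow> bool" where
  "valid_order P pairs \<longleftrightarrow> distinct pairs \<and> set pairs = {(p, q). p \<in> P \<and> q \<in> P \<and> p \<noteq> q}"

definition is_path :: "'a set set \<Rightarrow> 'a list \<Rightarrow> 'a \<Rightarrow> 'a \<Rightarrow> bool" where
  "is_path E xs p q \<longleftrightarrow> xs \<noteq> [] \<and> hd xs = p \<and> last xs = q \<and>
     (\<forall>i. Suc i < length xs \<longrightarrow> {xs ! i, xs ! Suc i} \<in> E)"

definition path_len :: "('a::metric_space) list \<Rightarrow> real" where
  "path_len xs = (\<Sum>i<length xs - 1. dist (xs ! i) (xs ! Suc i))"

definition num_edges :: "'a list \<Rightarrow> nat" where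
  "num_edges xs = length xs - 1"

end

theory Submission imports Defs begin

lemma covered_mono: "covered s E a b \<Longrightarrow> E \<subseteq> F \<Longrightarrow> covered s F a b"
  unfolding covered_def by blast

lemma covered_step: "s > -1 \<Longrightarrow> covered s (uc_step s E (a,b)) a b"
proof (cases "covered s E a b")
  case True then show ?thesis by (simp add: uc_step_def)
next
  case False
  assume s: "s > -1"
  have "0 \<le> dist a b / (2 * s + 2)" using s by simp
  then have "covered s (insert {a,b} E) a b" unfolding covered_def
    by (intro exI[of _ a] exI[of _ b]) simp
  then show ?thesis using False unfolding uc_step_def by simp
qed

lemma step_mono: "E \<subseteq> uc_step s E x"
  unfolding uc_step_def by auto

lemma fold_inv:
  assumes "s > -1"
  shows "E \<subseteq> foldl (uc_step s) E xs \<and> (\<forall>(a,b)\<in>set xs. covered s (foldl (uc_step s) E xs) a b)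
     \<and> foldl (uc_step s) E xs \<subseteq> E \<union> {{a,b} | a b. (a,b) \<in> set xs}"
proof (induction xs arbitrary: E)
  case Nil
  then show ?case by simp
next
  case (Cons x xs)
  obtain a b where x: "x = (a,b)" by fastforce
  have IH: "uc_step s E x \<subseteq> foldl (uc_step s) (uc_step s E x) xs \<and> (\<forall>(a,b)\<in>set xs. covered s (foldl (uc_step s) (uc_step s E x) xs) a b)
     \<and> foldl (uc_step s) (uc_step s E x) xs \<subseteq> uc_step s E x \<union> {{a,b} | a b. (a,b) \<in> set xs}"
    using Cons.IH by blast
  have c: "covered s (uc_step s E x) a b" using covered_step[OF assms] x by simp
  have sub: "uc_step s E x \<subseteq> E \<union> {{a,b}}" unfolding uc_step_def x by auto
  show ?case using IH c sub step_mono[of E s x] covered_mono x by (auto; blast)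
qed

lemma path_len_single[simp]: "path_len [x] = 0" by (simp add: path_len_def)

lemma path_len_Cons: "path_len (x # y # zs) = dist x y + path_len (y # zs)"
  unfolding path_len_def by (simp add: sum.lessThan_Suc_shift del: sum.lessThan_Suc)

lemma path_len_append:
  "xs \<noteq> [] \<Longrightarrow> ys \<noteq> [] \<Longrightarrow> path_len (xs @ ys) = path_len xs + dist (last xs) (hd ys) + path_len ys"
proof (induction xs rule: induct_list012)
  case 1 then show ?case by simp
next
  case (2 x) then show ?case by (cases ys) (auto simp: path_len_Cons)
next
  case (3 x y zs) then show ?case by (simp add: path_len_Cons)
qed

lemma is_path_single: "is_path E [a] a a" by (simp add: is_path_def)

lemma is_path_append:
  assumes "is_path E xs a b" "is_path E ys c d" "{b,c} \<in> E"
  shows "is_path E (xs @ ys) a d"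
  unfolding is_path_def
proof (intro conjI allI impI)
  show "xs @ ys \<noteq> []" using assms by (simp add: is_path_def)
  show "hd (xs @ ys) = a" using assms by (simp add: is_path_def)
  show "last (xs @ ys) = d" using assms by (simp add: is_path_def)
  fix i assume i: "Suc i < length (xs @ ys)"
  consider "Suc i < length xs" | "Suc i = length xs" | "Suc i > length xs" by linarith
  then show "{(xs @ ys) ! i, (xs @ ys) ! Suc i} \<in> E"
  proof cases
    case 1 then show ?thesis using assms(1) by (simp add: nth_append is_path_def)
  next
    case 2
    have "xs ! i = last xs" using 2 by (metis diff_Suc_1 last_conv_nth list.size(3) nat.distinct(1))
    moreover have "ys ! 0 = hd ys" using assms(2) by (metis hd_conv_nth is_path_def)
    ultimately show ?thesis using 2 assms by (simp add: nth_append is_path_def)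
  next
    case 3
    then obtain j where j: "i = length xs + j" by (metis less_Suc_eq_le le_Suc_ex Suc_leD less_eq_Suc_le)
    have "Suc j < length ys" using i j by simp
    then show ?thesis using assms(2) j by (simp add: nth_append is_path_def)
  qed
qed

lemma num_edges_append: "xs \<noteq> [] \<Longrightarrow> ys \<noteq> [] \<Longrightarrow> num_edges (xs @ ys) = num_edges xs + 1 + num_edges ys"
  by (cases xs; cases ys) (simp_all add: num_edges_def)


lemma radius_bound:
  fixes a b c D s :: real
  assumes "s > 1" "0 \<le> a" "0 \<le> b" "a \<le> c / (2 * s + 2)" "b \<le> c / (2 * s + 2)" "c \<le> a + D + b"
  shows "a \<le> D / (2 * s)" "b \<le> D/(2 * s)"
proof -
  have "a * (2 * s + 2) \<le> c" "b*(2 * s + 2) \<le> c" using assms by (simp_all add: field_simps)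
  hence "c * (2 * s + 2) \<le> (a+D+b)*(2 * s + 2)" using assms by (intro mult_right_mono) auto
  hence "c * (2 * s) \<le> D * (2 * s + 2)" using \<open>a * (2 * s + 2) \<le> c\<close> \<open>b*(2 * s + 2) \<le> c\<close> by (simp add: algebra_simps)
  hence "c / (2 * s + 2) \<le> D/(2 * s)" using assms by (simp add: field_simps)
  thus "a \<le> D / (2 * s)" "b \<le> D/(2 * s)" using assms by linarith+
qed

lemma len_arith:
  fixes a b c D s L1 L2 :: real
  assumes "s > 1" "L1 \<le> (s+1)/(s-1) * a" "L2 \<le> (s+1)/(s-1) * b" "c \<le> a + D + b"
    "a \<le> D/(2 * s)" "b \<le> D/(2 * s)"
  shows "L1 + c + L2 \<le> (s+1)/(s-1) * D"
proof -
  have "a + b \<le> D / s" using assms(5,6) assms(1) by (simp add: field_simps)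
  hence "(a+b) * (2 * s) \<le> 2*D" using assms(1) by (simp add: field_simps)
  have "(s+1)/(s-1)*(a+b) = (s+1)/(s-1)*a + (s+1)/(s-1)*b" by (simp add: distrib_left)
  hence "L1 + c + L2 \<le> (s+1)/(s-1)*(a+b) + (a+b) + D" using assms(2,3,4) by linarith
  also have "\<dots> = ((a+b)*(2 * s) + D*(s-1)) / (s-1)" using assms(1) by (simp add: field_simps)
  also have "\<dots> \<le> (2*D + D*(s-1))/(s-1)" using \<open>(a+b) * (2 * s) \<le> 2*D\<close> assms(1)
    by (intro divide_right_mono) auto
  also have "\<dots> = (s+1)/(s-1) * D" using assms(1) by (simp add: field_simps)
  finally show ?thesis .
qed

lemma powr_half:
  fixes s D :: real
  assumes "s > 1" "D > 0"
  shows "(D/(2 * s)) powr (1/(1+lg s)) = D powr (1/(1+lg s)) / 2"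
proof -
  have "log 2 s > 0" using assms by simp
  hence l: "1 + lg s > 0" unfolding lg_def by simp
  have "log 2 (2 * s) = 1 + lg s" using assms unfolding lg_def by (simp add: log_mult)
  have "(2 * s) powr (1/(1+lg s)) = (2 powr (log 2 (2 * s))) powr (1/(1+lg s))" using assms by simp
  also have "\<dots> = 2 powr (log 2 (2 * s) * (1/(1+lg s)))" by (simp add: powr_powr)
  also have "\<dots> = 2" using \<open>log 2 (2 * s) = 1 + lg s\<close> l by simp
  finally have "(2 * s) powr (1/(1+lg s)) = 2" .
  thus ?thesis using assms by (simp add: powr_divide)
qed

lemma edge_arith:
  fixes e1 e2 A B Da :: real
  assumes "e1 \<le> (if P1 then 0 else 2*A - 1)" "e2 \<le> (if P2 then 0 else 2*B - 1)"
    "A \<le> Da/2" "B \<le> Da/2" "Da \<ge> 1"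
  shows "e1 + 1 + e2 \<le> 2 * Da - 1"
  using assms by (cases P1; cases P2) auto


theorem theorem12:
  fixes P :: "(real ^ 'd) set" and s :: real and pairs :: "((real ^ 'd) \<times> (real ^ 'd)) list"
  assumes "finite P"
    and "\<forall>p\<in>P. \<forall>q\<in>P. p \<noteq> q \<longrightarrow> dist p q \<ge> 1"
    and "\<exists>p\<in>P. \<exists>q\<in>P. p \<noteq> q \<and> dist p q = 1"
    and "s > 1"
    and "valid_order P pairs"
    and "p \<in> P" and "q \<in> P"
  shows "\<exists>xs. is_path (uc_graph s pairs) xs p q
           \<and> path_len xs \<le> (s + 1) / (s - 1) * dist p q
           \<and> real (num_edges xs) \<le> 2 * dist p q powr (1 / (1 + lg s))"
proof -
  define G where "G = uc_graph s pairs"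
  define t where "t = (s + 1) / (s - 1)"
  define \<alpha> where "\<alpha> = 1 / (1 + lg s)"
  have s1: "s > 1" using assms(4) .
  have "log 2 s > 0" using s1 by simp
  hence \<alpha>pos: "\<alpha> > 0" unfolding \<alpha>_def lg_def by simp
  have inv: "(\<forall>(a,b)\<in>set pairs. covered s G a b) \<and> G \<subseteq> {} \<union> {{a,b} | a b. (a,b) \<in> set pairs}"
    using fold_inv[of s "{}" pairs] s1 unfolding G_def uc_graph_def by simp
  have setp: "set pairs = {(p, q). p \<in> P \<and> q \<in> P \<and> p \<noteq> q}"
    using assms(5) unfolding valid_order_def by simp
  have cov: "\<And>a b. a \<in> P \<Longrightarrow> b \<in> P \<Longrightarrow> a \<noteq> b \<Longrightarrow> covered s G a b"
    using inv setp by auto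
  have edges: "\<And>a b. {a,b} \<in> G \<Longrightarrow> a \<in> P \<and> b \<in> P"
  proof -
    fix a b assume "{a,b} \<in> G"
    then obtain u v where "{a,b} = {u,v}" "u \<in> P" "v \<in> P" using inv setp by blast
    thus "a \<in> P \<and> b \<in> P" by (auto simp: doubleton_eq_iff)
  qed
  define f where "f x y = card {(u,v) \<in> P \<times> P. dist u v < dist x y}" for x y :: "real^'d"
  have fin: "finite {(u,v) \<in> P \<times> P. dist u v < D}" for D
    by (rule finite_subset[of _ "P \<times> P"]) (auto simp: assms(1))
  have main: "\<forall>(p::real^'d) (q::real^'d). f p q = n \<longrightarrow> p \<in> P \<longrightarrow> q \<in> P \<longrightarrow> p \<noteq> q \<longrightarrow>
      (\<exists>xs. is_path G xs p q \<and> path_len xs \<le> t * dist p q \<and> real (num_edges xs) \<le> 2 * dist p q powr \<alpha> - 1)" for n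
  proof (induction n rule: less_induct)
    case (less n)
    show ?case
    proof (intro allI impI)
      fix p q assume fn: "f p q = n" and pP: "p \<in> P" and qP: "q \<in> P" and pq: "p \<noteq> q"
      define D where "D = dist p q"
      have D1: "D \<ge> 1" using assms(2) pP qP pq unfolding D_def by blast
      obtain p' q' where e: "{p',q'} \<in> G" and h1: "dist p p' \<le> dist p' q' / (2 * s + 2)"
          and h2: "dist q q' \<le> dist p' q' / (2 * s + 2)"
        using cov[OF pP qP pq] unfolding covered_def by blast
      have p'P: "p' \<in> P" and q'P: "q' \<in> P" using edges[OF e] by auto
      have "dist p' q' \<le> dist p' p + dist p q'" by (rule dist_triangle)
      also have "dist p q' \<le> dist p q + dist q q'" by (rule dist_triangle)
      finally have tri: "dist p' q' \<le> dist p p' + D + dist q q'" unfolding D_def by (simp add: dist_commute)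
      have ra: "dist p p' \<le> D / (2 * s)" and rb: "dist q q' \<le> D / (2 * s)"
        using radius_bound[OF s1 _ _ h1 h2 tri] by auto
      have sub: "\<exists>xs. is_path G xs a b \<and> path_len xs \<le> t * dist a b \<and>
           real (num_edges xs) \<le> (if a = b then 0 else 2 * dist a b powr \<alpha> - 1)"
        if aP: "a \<in> P" and bP: "b \<in> P" and ab: "dist a b \<le> D / (2 * s)" for a b
      proof (cases "a = b")
        case True
        then show ?thesis by (intro exI[of _ "[a]"]) (simp add: is_path_single num_edges_def)
      next
        case False
        have "D / (2 * s) < D" using D1 s1 by (simp add: field_simps)
        hence lt: "dist a b < D" using ab by linarith
        have "{(u,v) \<in> P \<times> P. dist u v < dist a b} \<subset> {(u,v) \<in> P \<times> P. dist u v < D}"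
        proof
          show "{(u,v) \<in> P \<times> P. dist u v < dist a b} \<subseteq> {(u,v) \<in> P \<times> P. dist u v < D}"
            using lt by auto
          have "(a,b) \<in> {(u,v) \<in> P \<times> P. dist u v < D}" using lt aP bP by simp
          moreover have "(a,b) \<notin> {(u,v) \<in> P \<times> P. dist u v < dist a b}" by simp
          ultimately show "{(u,v) \<in> P \<times> P. dist u v < dist a b} \<noteq> {(u,v) \<in> P \<times> P. dist u v < D}" by blast
        qed
        hence "card {(u,v) \<in> P \<times> P. dist u v < dist a b} < card {(u,v) \<in> P \<times> P. dist u v < D}"
          by (rule psubset_card_mono[OF fin])
        hence "f a b < n" using fn unfolding f_def D_def by simp
        then have "\<exists>xs. is_path G xs a b \<and> path_len xs \<le> t * dist a b \<and> real (num_edges xs) \<le> 2 * dist a b powr \<alpha> - 1"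
          using less.IH[of "f a b"] aP bP False by blast
        then show ?thesis using False by simp
      qed
      obtain xs1 where x1: "is_path G xs1 p p'" "path_len xs1 \<le> t * dist p p'"
          "real (num_edges xs1) \<le> (if p = p' then 0 else 2 * dist p p' powr \<alpha> - 1)"
        using sub[OF pP p'P ra] by blast
      have rb': "dist q' q \<le> D / (2 * s)" using rb by (simp add: dist_commute)
      obtain xs2 where x2: "is_path G xs2 q' q" "path_len xs2 \<le> t * dist q' q"
          "real (num_edges xs2) \<le> (if q' = q then 0 else 2 * dist q' q powr \<alpha> - 1)"
        using sub[OF q'P qP rb'] by blast
      have ne: "xs1 \<noteq> []" "xs2 \<noteq> []" "last xs1 = p'" "hd xs2 = q'"
        using x1(1) x2(1) unfolding is_path_def by auto
      have P: "is_path G (xs1 @ xs2) p q" using is_path_append[OF x1(1) x2(1) e] .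
      have L: "path_len (xs1 @ xs2) \<le> t * D"
        unfolding path_len_append[OF ne(1,2)] ne(3,4) t_def
        using len_arith[OF s1 x1(2)[unfolded t_def] x2(2)[unfolded t_def] _ ra rb'] tri
        by (simp add: dist_commute)
      have Dpos: "D > 0" using D1 by simp
      have Da: "D powr \<alpha> \<ge> 1" using D1 \<alpha>pos by (simp add: ge_one_powr_ge_zero)
      have half: "(D / (2 * s)) powr \<alpha> = D powr \<alpha> / 2" using powr_half[OF s1 Dpos] unfolding \<alpha>_def .
      have A: "dist p p' powr \<alpha> \<le> D powr \<alpha> / 2"
        using powr_mono2[of \<alpha> "dist p p'" "D / (2 * s)"] \<alpha>pos ra half by simp
      have B: "dist q' q powr \<alpha> \<le> D powr \<alpha> / 2"
        using powr_mono2[of \<alpha> "dist q' q" "D / (2 * s)"] \<alpha>pos rb' half by simp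
      have "real (num_edges (xs1 @ xs2)) = real (num_edges xs1) + 1 + real (num_edges xs2)"
        using num_edges_append[OF ne(1,2)] by simp
      also have "\<dots> \<le> 2 * D powr \<alpha> - 1"
        by (rule edge_arith[OF x1(3) x2(3) A B Da])
      finally show "\<exists>xs. is_path G xs p q \<and> path_len xs \<le> t * dist p q \<and> real (num_edges xs) \<le> 2 * dist p q powr \<alpha> - 1"
        using P L unfolding D_def by blast
    qed
  qed
  show ?thesis
  proof (cases "p = q")
    case True
    then show ?thesis by (intro exI[of _ "[p]"]) (simp add: is_path_single num_edges_def)
  next
    case False
    then obtain xs where "is_path G xs p q" "path_len xs \<le> t * dist p q" "real (num_edges xs) \<le> 2 * dist p q powr \<alpha> - 1"
      using main assms(6,7) by blast
    then show ?thesis unfolding G_def t_def \<alpha>_def by (intro exI[of _ xs]) simp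
  qed
qed

end
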